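(* Fix integers $t\ge1$, $C_1,\dots,C_t\ge1$, and $A_i,B_i$ with $0\le A_i\le C_i/2$, $0\le B_i\le C_i/2$ for all $i$, and an integer $m$. For each integer $N$ let $S_N$ be the set of tuples $(\mu_1,\dots,\mu_t;d_1,\dots,d_t)\in P^t\times\mathbb Z^t$ with $\sum_i d_i$ odd and $\sum_i C_i|\mu_i|+\sum_iC_i\binom{d_i}{2}+\sum_iA_id_i=N$, and let $T_N$ be the set of tuples $(\alpha_1,\dots,\alpha_t;e_1,\dots,e_t)\in P^t\times\mathbb Z^t$ with $\sum_ie_i$ odd and $\sum_iC_i|\alpha_i|+\sum_iC_i\binom{e_i}{2}+\sum_iB_ie_i+m=N$. Assume $m$ is such that the smallest $N$ with $T_N\neq\emptyset$ equals the second smallest $N$ with $S_N\ne\emptyset$. Let $k$ be the smallest $N$ with $S_N\ne\emptyset$. For each $N$ define $$u_N=\#\Big\{(d_1,\dots,d_t)\in\mathbb Z^t:\ \textstyle\sum d_i\text{ odd},\ \sum_iC_i\binom{d_i}{2}+\sum_iA_id_i=N\Big\}+|S_k|\cdot\#\Big\{(f_1,\dots,f_t)\in\mathbb Z^t:\ \textstyle\sum f_i\text{ odd},\ \sum_iC_i\frac{f_i(3f_i-1)}{2}+k=N\Big\},$$ $$v_N=\#\Big\{(e_1,\dots,e_t)\in\mathbb Z^t:\ \textstyle\sum e_i\text{ odd},\ \sum_iC_i\binom{e_i}{2}+\sum_iB_ie_i+m=N\Big\}+|S_k|\cdot\#\Big\{(f_1,\dots,f_t)\in\mathbb Z^t:\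 \textstyle\sum f_i\text{ even},\ \sum_iC_i\frac{f_i(3f_i-1)}{2}+k=N\Big\}.$$ (These are the cardinalities of the sets $U_N$, $V_N$ formed as disjoint unions of the first set with $|S_k|$ copies of the second set.) Then $|S_N|=|T_N|$ for all $N>k$ if and only if $u_N=v_N$ for all integers $N$.
   Context: $P$ denotes the set of all integer partitions into positive parts (including the empty partition); for a partition $\lambda$, $|\lambda|$ is the sum of its parts. For $d\in\mathbb Z$, $\binom{d}{2}=d(d-1)/2$. *)

theory Defs
  imports Main "HOL-Library.Multiset" "HOL-Library.FuncSet"
begin

definition partitions :: "nat multiset set" where
  "partitions = {lam. \<forall>x\<in>#lam. 0 < x}"

definition psize :: "nat multiset \<Rightarrow> nat" where
  "psize lam = sum_mset lam"

text \<open>binomial d choose 2 = d(d-1)/2 for integer d (exact division).\<close>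
definition binom2 :: "int \<Rightarrow> int" where
  "binom2 d = d * (d - 1) div 2"

text \<open>pentagonal f(3f-1)/2 (exact division).\<close>
definition pent :: "int \<Rightarrow> int" where
  "pent f = f * (3 * f - 1) div 2"

text \<open>Tuples indexed by i in {0..<t} (i.e. 1..t shifted).\<close>
definition Sset :: "nat \<Rightarrow> (nat \<Rightarrow> int) \<Rightarrow> (nat \<Rightarrow> int) \<Rightarrow> int
    \<Rightarrow> ((nat \<Rightarrow> nat multiset) \<times> (nat \<Rightarrow> int)) set" where
  "Sset t C A N = {(mu, d). mu \<in> {..<t} \<rightarrow>\<^sub>E partitions \<and> d \<in> {..<t} \<rightarrow>\<^sub>E (UNIV :: int set)
     \<and> odd (\<Sum>i<t. d i)
     \<and> (\<Sum>i<t. C i * int (psize (mu i))) + (\<Sum>i<t. C i * binom2 (d i)) + (\<Sum>i<t. A i * d i) = N}"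

definition Tset :: "nat \<Rightarrow> (nat \<Rightarrow> int) \<Rightarrow> (nat \<Rightarrow> int) \<Rightarrow> int \<Rightarrow> int
    \<Rightarrow> ((nat \<Rightarrow> nat multiset) \<times> (nat \<Rightarrow> int)) set" where
  "Tset t C B m N = {(al, e). al \<in> {..<t} \<rightarrow>\<^sub>E partitions \<and> e \<in> {..<t} \<rightarrow>\<^sub>E (UNIV :: int set)
     \<and> odd (\<Sum>i<t. e i)
     \<and> (\<Sum>i<t. C i * int (psize (al i))) + (\<Sum>i<t. C i * binom2 (e i)) + (\<Sum>i<t. B i * e i) + m = N}"

definition uN :: "nat \<Rightarrow> (nat \<Rightarrow> int) \<Rightarrow> (nat \<Rightarrow> int) \<Rightarrow> int \<Rightarrow> int \<Rightarrow> nat" where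
  "uN t C A k N =
     card {d. d \<in> {..<t} \<rightarrow>\<^sub>E (UNIV :: int set) \<and> odd (\<Sum>i<t. d i)
              \<and> (\<Sum>i<t. C i * binom2 (d i)) + (\<Sum>i<t. A i * d i) = N}
   + card (Sset t C A k) *
     card {f. f \<in> {..<t} \<rightarrow>\<^sub>E (UNIV :: int set) \<and> odd (\<Sum>i<t. f i)
              \<and> (\<Sum>i<t. C i * pent (f i)) + k = N}"

definition vN :: "nat \<Rightarrow> (nat \<Rightarrow> int) \<Rightarrow> (nat \<Rightarrow> int) \<Rightarrow> (nat \<Rightarrow> int) \<Rightarrow> int \<Rightarrow> int \<Rightarrow> int \<Rightarrow> nat" where
  "vN t C A B m k N =
     card {e. e \<in> {..<t} \<rightarrow>\<^sub>E (UNIV :: int set) \<and> odd (\<Sum>i<t. e i)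
              \<and> (\<Sum>i<t. C i * binom2 (e i)) + (\<Sum>i<t. B i * e i) + m = N}
   + card (Sset t C A k) *
     card {f. f \<in> {..<t} \<rightarrow>\<^sub>E (UNIV :: int set) \<and> even (\<Sum>i<t. f i)
              \<and> (\<Sum>i<t. C i * pent (f i)) + k = N}"

end

theory Submission
  imports Defs "HOL-Computational_Algebra.Formal_Power_Series"
begin
unbundle fps_syntax


definition ser :: "'a set \<Rightarrow> ('a \<Rightarrow> int) \<Rightarrow> ('a \<Rightarrow> int) \<Rightarrow> int fps" where
  "ser X w s = Abs_fps (\<lambda>n. \<Sum>x\<in>{x\<in>X. w x = int n}. s x)"

definition good :: "'a set \<Rightarrow> ('a \<Rightarrow> int) \<Rightarrow> bool" where
  "good X w \<longleftrightarrow> (\<forall>x\<in>X. 0 \<le> w x) \<and> (\<forall>n. finite {x\<in>X. w x = n})"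

lemma ser_nth: "ser X w s $ n = (\<Sum>x\<in>{x\<in>X. w x = int n}. s x)"
  by (simp add: ser_def)

lemma ser_cong:
  assumes "\<And>x. x\<in>X \<Longrightarrow> w x = w' x" "\<And>x. x\<in>X \<Longrightarrow> s x = s' x"
  shows "ser X w s = ser X w' s'"
proof (rule fps_ext)
  fix n
  have "{x\<in>X. w x = int n} = {x\<in>X. w' x = int n}" using assms by auto
  then show "ser X w s $ n = ser X w' s' $ n"
    unfolding ser_nth using assms by (auto intro!: sum.cong)
qed

lemma good_cong:
  assumes "\<And>x. x\<in>X \<Longrightarrow> w x = w' x" "good X w"
  shows "good X w'"
proof -
  have "{x\<in>X. w x = n} = {x\<in>X. w' x = n}" for n using assms by auto
  then show ?thesis using assms unfolding good_def by auto
qed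

lemma ser_bij:
  assumes "bij_betw h Y X"
  shows "ser Y (\<lambda>y. w (h y)) (\<lambda>y. s (h y)) = ser X w s"
proof (rule fps_ext)
  fix n
  have b: "bij_betw h {y\<in>Y. w (h y) = int n} {x\<in>X. w x = int n}"
    using assms unfolding bij_betw_def inj_on_def by auto
  show "ser Y (\<lambda>y. w (h y)) (\<lambda>y. s (h y)) $ n = ser X w s $ n"
    unfolding ser_nth using sum.reindex_bij_betw[OF b, of s] by simp
qed

lemma good_bij:
  assumes "bij_betw h Y X" "good X w"
  shows "good Y (\<lambda>y. w (h y))"
proof -
  have "finite {y\<in>Y. w (h y) = n}" for n
  proof -
    have b: "bij_betw h {y\<in>Y. w (h y) = n} {x\<in>X. w x = n}"
      using assms(1) unfolding bij_betw_def inj_on_def by auto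
    then show ?thesis using assms(2) bij_betw_finite unfolding good_def by blast
  qed
  moreover have "\<forall>y\<in>Y. 0 \<le> w (h y)" using assms unfolding good_def bij_betw_def by auto
  ultimately show ?thesis unfolding good_def by auto
qed

lemma fib_times:
  assumes "good X w1" "good Y w2"
  shows "{p\<in>X\<times>Y. w1 (fst p) + w2 (snd p) = int n}
       = (\<Union>i\<in>{0..n}. {x\<in>X. w1 x = int i} \<times> {y\<in>Y. w2 y = int (n-i)})"
proof safe
  fix x y assume xy: "x\<in>X" "y\<in>Y" "w1 (fst (x,y)) + w2 (snd (x,y)) = int n"
  have "0 \<le> w1 x" "0 \<le> w2 y" using assms xy unfolding good_def by auto
  then show "(x,y) \<in> (\<Union>i\<in>{0..n}. {x\<in>X. w1 x = int i} \<times> {y\<in>Y. w2 y = int (n-i)})"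
    using xy by (intro UN_I[of "nat (w1 x)"]) auto
qed auto

lemma ser_times:
  assumes "good X w1" "good Y w2"
  shows "ser (X\<times>Y) (\<lambda>p. w1 (fst p) + w2 (snd p)) (\<lambda>p. s1 (fst p) * s2 (snd p))
        = ser X w1 s1 * ser Y w2 s2"
proof (rule fps_ext)
  fix n
  have fin1: "finite {x\<in>X. w1 x = i}" for i using assms unfolding good_def by auto
  have fin2: "finite {x\<in>Y. w2 x = i}" for i using assms unfolding good_def by auto
  have "ser (X\<times>Y) (\<lambda>p. w1 (fst p) + w2 (snd p)) (\<lambda>p. s1 (fst p) * s2 (snd p)) $ n
      = (\<Sum>p\<in>(\<Union>i\<in>{0..n}. {x\<in>X. w1 x = int i} \<times> {y\<in>Y. w2 y = int (n-i)}). s1 (fst p) * s2 (snd p))"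
    unfolding ser_nth fib_times[OF assms] ..
  also have "\<dots> = (\<Sum>i\<in>{0..n}. \<Sum>p\<in>{x\<in>X. w1 x = int i} \<times> {y\<in>Y. w2 y = int (n-i)}. s1 (fst p) * s2 (snd p))"
    by (rule sum.UNION_disjoint) (auto simp: fin1 fin2)
  also have "\<dots> = (\<Sum>i\<in>{0..n}. ser X w1 s1 $ i * ser Y w2 s2 $ (n - i))"
    unfolding ser_nth sum_product sum.cartesian_product by (simp add: case_prod_beta)
  finally show "ser (X\<times>Y) (\<lambda>p. w1 (fst p) + w2 (snd p)) (\<lambda>p. s1 (fst p) * s2 (snd p)) $ n =
    (ser X w1 s1 * ser Y w2 s2) $ n" by (simp add: fps_mult_nth)
qed

lemma good_times:
  assumes "good X w1" "good Y w2"
  shows "good (X\<times>Y) (\<lambda>p. w1 (fst p) + w2 (snd p))"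
proof -
  have fin1: "finite {x\<in>X. w1 x = i}" for i using assms unfolding good_def by auto
  have fin2: "finite {x\<in>Y. w2 x = i}" for i using assms unfolding good_def by auto
  have "finite {p\<in>X\<times>Y. w1 (fst p) + w2 (snd p) = n}" for n
  proof (cases "n < 0")
    case True
    then have "{p\<in>X\<times>Y. w1 (fst p) + w2 (snd p) = n} = {}" using assms unfolding good_def by force
    then show ?thesis by (metis finite.emptyI)
  next
    case False
    then obtain k where "n = int k" by (metis nonneg_int_cases not_less)
    have "finite (\<Union>i\<in>{0..k}. {x\<in>X. w1 x = int i} \<times> {y\<in>Y. w2 y = int (k-i)})"
      by (auto simp: fin1 fin2)
    then show ?thesis using fib_times[OF assms, of k] \<open>n = int k\<close> by simp
  qed
  then show ?thesis using assms unfolding good_def by auto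
qed

lemma bij_upd:
  "bij_betw (\<lambda>p. (fst p)(t := snd p)) (PiE {..<t} X \<times> X t) (PiE {..<Suc t} X)"
proof -
  have "inj_on (\<lambda>p. (fst p)(t := snd p)) (PiE {..<t} X \<times> X t)"
  proof (rule inj_onI)
    fix p q assume pq: "p \<in> PiE {..<t} X \<times> X t" "q \<in> PiE {..<t} X \<times> X t"
      "(fst p)(t := snd p) = (fst q)(t := snd q)"
    then have "snd p = snd q" by (metis fun_upd_same)
    moreover have "fst p = fst q"
    proof
      fix i show "fst p i = fst q i"
      proof (cases "i = t")
        case True then show ?thesis using pq by (auto simp: PiE_def extensional_def)
      next
        case False then show ?thesis using pq(3) by (metis fun_upd_other)
      qed
    qed
    ultimately show "p = q" by (simp add: prod_eq_iff)
  qed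
  moreover have "(\<lambda>p. (fst p)(t := snd p)) ` (PiE {..<t} X \<times> X t) = PiE {..<Suc t} X"
  proof (rule subset_antisym)
   show "(\<lambda>p. (fst p)(t := snd p)) ` (PiE {..<t} X \<times> X t) \<subseteq> PiE {..<Suc t} X"
   proof (rule image_subsetI)
    fix p assume "p \<in> PiE {..<t} X \<times> X t"
    then obtain f x where fx: "f \<in> PiE {..<t} X" "x \<in> X t" and p: "p = (f,x)" by auto
    have a: "\<forall>i<t. f i \<in> X i" and b: "\<forall>i. \<not> i < t \<longrightarrow> f i = undefined"
      using fx(1) unfolding PiE_iff extensional_def by auto
    have "\<forall>i\<in>{..<Suc t}. (f(t:=x)) i \<in> X i"
    proof
      fix i assume "i \<in> {..<Suc t}"
      then have "i < t \<or> i = t" by auto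
      then show "(f(t:=x)) i \<in> X i" using a fx(2) by auto
    qed
    moreover have "f(t:=x) \<in> extensional {..<Suc t}"
      unfolding extensional_def using b by auto
    ultimately show "(fst p)(t := snd p) \<in> PiE {..<Suc t} X"
      unfolding PiE_iff p by simp
   qed
  next
   show "PiE {..<Suc t} X \<subseteq> (\<lambda>p. (fst p)(t := snd p)) ` (PiE {..<t} X \<times> X t)"
   proof
    fix g assume g: "g \<in> PiE {..<Suc t} X"
    have "g = (\<lambda>p. (fst p)(t := snd p)) (g(t := undefined), g t)" by simp
    moreover have "(g(t := undefined), g t) \<in> PiE {..<t} X \<times> X t"
      using g by (auto simp: PiE_def extensional_def Pi_def)
    ultimately show "g \<in> (\<lambda>p. (fst p)(t := snd p)) ` (PiE {..<t} X \<times> X t)" by blast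
   qed
  qed
  ultimately show ?thesis unfolding bij_betw_def by blast
qed

lemma ser_PiE:
  fixes t :: nat
  assumes "\<And>i. i < t \<Longrightarrow> good (X i) (w i)"
  shows "ser (PiE {..<t} X) (\<lambda>f. \<Sum>i<t. w i (f i)) (\<lambda>f. \<Prod>i<t. s i (f i))
           = (\<Prod>i<t. ser (X i) (w i) (s i))
        \<and> good (PiE {..<t} X) (\<lambda>f. \<Sum>i<t. w i (f i))"
  using assms
proof (induction t)
  case 0
  have "ser (PiE {..<0} X) (\<lambda>f. \<Sum>i<0. w i (f i)) (\<lambda>f. \<Prod>i<0. s i (f i)) = 1"
    by (rule fps_ext) (auto simp: ser_nth)
  moreover have "good (PiE {..<0} X) (\<lambda>f. \<Sum>i<0. w i (f i))" by (auto simp: good_def)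
  ultimately show ?case by simp
next
  case (Suc t)
  let ?h = "\<lambda>p. (fst p)(t := snd p)"
  have IH: "ser (PiE {..<t} X) (\<lambda>f. \<Sum>i<t. w i (f i)) (\<lambda>f. \<Prod>i<t. s i (f i))
           = (\<Prod>i<t. ser (X i) (w i) (s i))"
           "good (PiE {..<t} X) (\<lambda>f. \<Sum>i<t. w i (f i))" using Suc by auto
  have gt: "good (X t) (w t)" using Suc by auto
  have e1: "(\<Sum>i<Suc t. w i (?h p i)) = (\<Sum>i<t. w i (fst p i)) + w t (snd p)" for p
    by (simp add: lessThan_Suc sum.insert)
  have e2: "(\<Prod>i<Suc t. s i (?h p i)) = (\<Prod>i<t. s i (fst p i)) * s t (snd p)" for p
    by (simp add: lessThan_Suc prod.insert mult.commute)
  have "ser (PiE {..<Suc t} X) (\<lambda>f. \<Sum>i<Suc t. w i (f i)) (\<lambda>f. \<Prod>i<Suc t. s i (f i))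
      = ser (PiE {..<t} X \<times> X t) (\<lambda>p. \<Sum>i<Suc t. w i (?h p i)) (\<lambda>p. \<Prod>i<Suc t. s i (?h p i))"
    by (rule ser_bij[OF bij_upd, symmetric])
  also have "\<dots> = ser (PiE {..<t} X \<times> X t) (\<lambda>p. (\<Sum>i<t. w i (fst p i)) + w t (snd p))
                    (\<lambda>p. (\<Prod>i<t. s i (fst p i)) * s t (snd p))"
    unfolding e1 e2 ..
  also have "\<dots> = (\<Prod>i<Suc t. ser (X i) (w i) (s i))"
    using ser_times[OF IH(2) gt, of "\<lambda>f. \<Prod>i<t. s i (f i)" "s t"] IH(1) by simp
  finally have 1: "ser (PiE {..<Suc t} X) (\<lambda>f. \<Sum>i<Suc t. w i (f i)) (\<lambda>f. \<Prod>i<Suc t. s i (f i))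
      = (\<Prod>i<Suc t. ser (X i) (w i) (s i))" .
  have "good (PiE {..<t} X \<times> X t) (\<lambda>p. \<Sum>i<Suc t. w i (?h p i))"
    unfolding e1 by (rule good_times[OF IH(2) gt])
  then have "good (PiE {..<Suc t} X) (\<lambda>f. \<Sum>i<Suc t. w i (?h (inv_into (PiE {..<t} X \<times> X t) ?h f) i))"
    by (rule good_bij[OF bij_betw_inv_into[OF bij_upd]])
  then have "good (PiE {..<Suc t} X) (\<lambda>f. \<Sum>i<Suc t. w i (f i))"
  proof (rule good_cong[rotated])
    fix f assume f: "f \<in> PiE {..<Suc t} X"
    have "?h (inv_into (PiE {..<t} X \<times> X t) ?h f) = f"
    proof (rule f_inv_into_f)
      have s: "?h ` (PiE {..<t} X \<times> X t) = PiE {..<Suc t} X" by (rule bij_betw_imp_surj_on[OF bij_upd])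
      show "f \<in> ?h ` (PiE {..<t} X \<times> X t)" unfolding s by (rule f)
    qed
    then show "(\<Sum>i<Suc t. w i (?h (inv_into (PiE {..<t} X \<times> X t) ?h f) i)) = (\<Sum>i<Suc t. w i (f i))"
      by simp
  qed
  with 1 show ?case by blast
qed



fun tri :: "nat \<Rightarrow> nat" where
  "tri 0 = 0" | "tri (Suc n) = tri n + Suc n"

lemma tri_eq: "2 * tri n = n * (n + 1)"
  by (induction n) (auto simp: algebra_simps)

definition pp :: "'a::comm_ring_1 \<Rightarrow> nat \<Rightarrow> nat \<Rightarrow> 'a" where
  "pp x a b = (\<Prod>j\<in>{a..b}. 1 - x ^ j)"

definition Tm :: "'a::comm_ring_1 \<Rightarrow> nat \<Rightarrow> nat \<Rightarrow> 'a" where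
  "Tm x n k = (-1)^k * x^(k*n + tri k) * pp x (Suc k) n"

definition Um :: "'a::comm_ring_1 \<Rightarrow> nat \<Rightarrow> nat \<Rightarrow> 'a" where
  "Um x n k = (-1)^k * x^(k*(n+1) + tri k + (n+1)) * pp x (Suc k) n"

definition Wm :: "'a::comm_ring_1 \<Rightarrow> nat \<Rightarrow> nat \<Rightarrow> 'a" where
  "Wm x n k = - ((-1)^k * x^(k*n + tri k) * pp x k n)"

definition e1 :: "nat \<Rightarrow> nat" where "e1 i = i*i + tri i - i"
definition e2 :: "nat \<Rightarrow> nat" where "e2 i = i*i + tri i"

definition Sh :: "'a::comm_ring_1 \<Rightarrow> nat \<Rightarrow> 'a" where
  "Sh x n = (\<Sum>k\<le>n. Tm x n k)"

definition Rh :: "'a::comm_ring_1 \<Rightarrow> nat \<Rightarrow> 'a" where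
  "Rh x n = 1 + (\<Sum>i\<in>{1..n}. (-1)^i * (x^(e1 i) + x^(e2 i)))"

lemma pp_Suc_right: "a \<le> Suc b \<Longrightarrow> pp x a (Suc b) = pp x a b * (1 - x^(Suc b))"
  unfolding pp_def by (simp add: prod.cl_ivl_Suc)

lemma pp_Suc_left: "a \<le> b \<Longrightarrow> pp x a b = (1 - x^a) * pp x (Suc a) b"
  unfolding pp_def by (simp add: prod.atLeast_Suc_atMost)

lemma pp_empty: "b < a \<Longrightarrow> pp x a b = 1"
  unfolding pp_def by simp

lemma D: assumes "k \<le> n" shows "Tm x (Suc n) k = Tm x n k + Wm x n k - Um x n k"
proof -
  let ?s = "(-1::'a)^k" and ?a = "x^(k*n + tri k)" and ?P = "pp x (Suc k) n"
  have 1: "Tm x (Suc n) k = ?s * (?a * x^k) * (?P * (1 - x^(Suc n)))"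
  proof -
    have e: "pp x (Suc k) (Suc n) = ?P * (1 - x^(Suc n))" using assms by (simp add: pp_Suc_right)
    show ?thesis unfolding Tm_def e by (simp add: power_add algebra_simps)
  qed
  have 2: "Wm x n k = - (?s * ?a * ((1 - x^k) * ?P))"
    unfolding Wm_def using assms by (simp add: pp_Suc_left)
  have 3: "Um x n k = ?s * (?a * x^k * x^(Suc n)) * ?P"
    unfolding Um_def by (simp add: power_add algebra_simps)
  show ?thesis unfolding 1 2 3 by (simp add: Tm_def algebra_simps)
qed

lemma WU: assumes "Suc j \<le> n" shows "Wm x n (Suc j) = Um x n j"
proof -
  have e: "Suc j * n + tri (Suc j) = j*(n+1) + tri j + (n+1)" by (simp add: algebra_simps)
  show ?thesis unfolding Wm_def Um_def e by simp
qed

lemma W0: "Wm x n 0 = 0"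
  unfolding Wm_def using pp_Suc_left[of 0 n x] by simp

lemma tele: "m \<le> n \<Longrightarrow> (\<Sum>k\<le>m. Wm x n k - Um x n k) = - Um x n m"
proof (induction m)
  case 0 then show ?case by (simp add: W0)
next
  case (Suc m)
  then show ?case using WU[of m n x] by simp
qed

lemma Sh_Suc: "Sh x (Suc n) = Sh x n - Um x n n + Tm x (Suc n) (Suc n)"
proof -
  have "(\<Sum>k\<le>n. Tm x (Suc n) k) = (\<Sum>k\<le>n. Tm x n k + (Wm x n k - Um x n k))"
    by (rule sum.cong) (auto simp: D)
  also have "\<dots> = Sh x n - Um x n n"
    unfolding sum.distrib tele[OF order_refl] Sh_def by simp
  finally show ?thesis unfolding Sh_def by simp
qed

lemma Shanks: "Sh x n = Rh x n"
proof (induction n)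
  case 0 then show ?case by (simp add: Sh_def Rh_def Tm_def pp_empty)
next
  case (Suc n)
  have r: "Rh x (Suc n) = Rh x n + (-1)^(Suc n) * (x^(e1 (Suc n)) + x^(e2 (Suc n)))"
    unfolding Rh_def by (simp add: sum.cl_ivl_Suc)
  have u: "Um x n n = (-1)^n * x^(e1 (Suc n))"
  proof -
    have "n*(n+1) + tri n + (n+1) = e1 (Suc n)" unfolding e1_def by (simp add: algebra_simps)
    then show ?thesis unfolding Um_def by (simp add: pp_empty)
  qed
  have t: "Tm x (Suc n) (Suc n) = (-1)^(Suc n) * x^(e2 (Suc n))"
    unfolding Tm_def e2_def by (simp add: pp_empty)
  show ?case unfolding Sh_Suc Suc r u t by (simp add: algebra_simps)
qed



definition sg :: "int \<Rightarrow> int" where "sg j = (if even j then 1 else -1)"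

lemma tri_ge: "i \<le> tri i"
  by (induction i) auto

lemma e1_int: "2 * int (e1 i) = int i * (3 * int i - 1)"
proof -
  have "i \<le> i * i" by (cases i) auto
  then have "int (e1 i) = int (i*i) + int (tri i) - int i" unfolding e1_def by (subst of_nat_diff) (use tri_ge[of i] in auto)
  moreover have "2 * int (tri i) = int i * (int i + 1)"
  proof -
    have "int (2 * tri i) = int (i * (i + 1))" using tri_eq[of i] by (rule arg_cong)
    then show ?thesis by (simp add: algebra_simps)
  qed
  ultimately show ?thesis by (simp add: algebra_simps)
qed

lemma e2_int: "2 * int (e2 i) = int i * (3 * int i + 1)"
proof -
  have "2 * int (tri i) = int i * (int i + 1)"
  proof -
    have "int (2 * tri i) = int (i * (i + 1))" using tri_eq[of i] by (rule arg_cong)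
    then show ?thesis by (simp add: algebra_simps)
  qed
  then show ?thesis unfolding e2_def by (simp add: algebra_simps)
qed

lemma pent_pos: "pent (int i) = int (e1 i)"
  unfolding pent_def e1_int[symmetric] by simp

lemma pent_neg: "pent (- int i) = int (e2 i)"
proof -
  have "- int i * (3 * - int i - 1) = 2 * int (e2 i)" using e2_int[of i] by (simp add: algebra_simps)
  then show ?thesis unfolding pent_def by (simp only:)
qed

lemma e1_ge: "i \<le> e1 i"
proof -
  have "i \<le> i * i" by (cases i) auto
  then show ?thesis using tri_ge[of i] unfolding e1_def by linarith
qed

lemma e2_ge: "i \<le> e2 i"
  using tri_ge[of i] unfolding e2_def by linarith

lemma pent_ge: "\<bar>j\<bar> \<le> pent j"
proof (cases "j \<ge> 0")
  case True
  then obtain i where "j = int i" using nonneg_int_cases by blast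
  then show ?thesis using pent_pos[of i] e1_ge[of i] by simp
next
  case False
  then obtain i where "j = - int i" by (metis le_less neg_int_cases not_le)
  then show ?thesis using pent_neg[of i] e2_ge[of i] by simp
qed



lemma mem_le_sum: "x \<in># l \<Longrightarrow> x \<le> sum_mset (l::nat multiset)"
  by (induction l) auto

lemma size_le_sum: "\<forall>p\<in>#l. 0 < p \<Longrightarrow> size l \<le> sum_mset (l::nat multiset)"
  by (induction l) auto

lemma fin_part: "finite {l::nat multiset. (\<forall>p\<in>#l. 0 < p) \<and> sum_mset l = s}"
proof -
  have "{l::nat multiset. (\<forall>p\<in>#l. 0 < p) \<and> sum_mset l = s} \<subseteq> (\<Union>k\<in>{0..s}. multisets_of_size {1..s} k)"
  proof
    fix l :: "nat multiset" assume l: "l \<in> {l. (\<forall>p\<in>#l. 0 < p) \<and> sum_mset l = s}"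
    then have "size l \<le> s" using size_le_sum by auto
    moreover have "set_mset l \<subseteq> {1..s}" using l mem_le_sum by fastforce
    ultimately show "l \<in> (\<Union>k\<in>{0..s}. multisets_of_size {1..s} k)"
      unfolding multisets_of_size_def by auto
  qed
  moreover have "finite (\<Union>k\<in>{0..s}. multisets_of_size {1..s} k)" by auto
  ultimately show ?thesis by (rule finite_subset)
qed

definition Qs :: "nat \<Rightarrow> nat \<Rightarrow> int fps" where
  "Qs c M = ser {l \<in> partitions. \<forall>p\<in>#l. M < p} (\<lambda>l. int c * int (psize l)) (\<lambda>_. 1)"

definition Pser :: "nat \<Rightarrow> int fps" where
  "Pser c = ser partitions (\<lambda>l. int c * int (psize l)) (\<lambda>_. 1)"

lemma Qs_nth: "Qs c M $ n = int (card {l. (\<forall>p\<in>#l. M < p) \<and> c * sum_mset l = n})"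
proof -
  have eq: "(int c * int (psize x) = int n) = (c * psize x = n)" for x
    by (metis of_nat_eq_iff of_nat_mult)
  have "{x \<in> {l \<in> partitions. \<forall>p\<in>#l. M < p}. int c * int (psize x) = int n}
     = {x \<in> {l \<in> partitions. \<forall>p\<in>#l. M < p}. c * psize x = n}"
    by (simp only: eq)
  also have "\<dots> = {l. (\<forall>p\<in>#l. M < p) \<and> c * sum_mset l = n}"
    unfolding partitions_def psize_def by auto
  finally have "{x \<in> {l \<in> partitions. \<forall>p\<in>#l. M < p}. int c * int (psize x) = int n}
     = {l. (\<forall>p\<in>#l. M < p) \<and> c * sum_mset l = n}" .
  then show ?thesis unfolding Qs_def ser_nth by simp
qed

lemma Qs0: "Qs c 0 = Pser c"
  unfolding Qs_def Pser_def partitions_def by simp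

lemma fin_Q: fixes c n :: nat shows "0 < c \<Longrightarrow> finite {l. (\<forall>p\<in>#l. M < p) \<and> c * sum_mset l = n}"
proof -
  assume c: "0 < c"
  have "{l. (\<forall>p\<in>#l. M < p) \<and> c * sum_mset l = n} \<subseteq> {l::nat multiset. (\<forall>p\<in>#l. 0 < p) \<and> sum_mset l = n div c}"
  proof (rule subsetI)
    fix l assume "l \<in> {l. (\<forall>p\<in>#l. M < p) \<and> c * sum_mset l = n}"
    then have l: "\<forall>p\<in>#l. M < p" "c * sum_mset l = n" by auto
    from l(2) have "sum_mset l = n div c" using c by (metis nonzero_mult_div_cancel_left not_less0 less_zeroE mult_eq_0_iff)
    moreover have "\<forall>p\<in>#l. 0 < p" using l(1) by auto
    ultimately show "l \<in> {l::nat multiset. (\<forall>p\<in>#l. 0 < p) \<and> sum_mset l = n div c}" by simp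
  qed
  then show ?thesis using fin_part finite_subset by blast
qed

lemma Qstep: assumes c: "0 < c"
  shows "Qs c M = Qs c (Suc M) + fps_X^(c * Suc M) * Qs c M"
proof (rule fps_ext)
  fix n
  let ?F = "{l. (\<forall>p\<in>#l. M < p) \<and> c * sum_mset l = n}"
  let ?F1 = "{l. (\<forall>p\<in>#l. Suc M < p) \<and> c * sum_mset l = n}"
  let ?F2 = "{l. ((\<forall>p\<in>#l. M < p) \<and> c * sum_mset l = n) \<and> Suc M \<in># l}"
  have split: "?F = ?F1 \<union> ?F2"
  proof (rule set_eqI, rule iffI)
    fix l assume l: "l \<in> ?F"
    show "l \<in> ?F1 \<union> ?F2"
    proof (cases "\<forall>p\<in>#l. Suc M < p")
      case True then show ?thesis using l by auto
    next
      case False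
      then obtain p where p: "p \<in># l" "\<not> Suc M < p" by blast
      with l have "M < p" by auto
      with p have "p = Suc M" by auto
      with p l show ?thesis by auto
    qed
  qed auto
  have disj: "?F1 \<inter> ?F2 = {}" by auto
  have fin: "finite ?F" by (rule fin_Q[OF c])
  have f1: "finite ?F1" by (rule finite_subset[OF _ fin]) auto
  have f2: "finite ?F2" by (rule finite_subset[OF _ fin]) auto
  have cF: "card ?F = card ?F1 + card ?F2"
    using arg_cong[of _ _ card, OF split] card_Un_disjoint[OF f1 f2 disj] by (rule trans)
  have cF2: "card ?F2 = (if n < c * Suc M then 0 else card {l. (\<forall>p\<in>#l. M < p) \<and> c * sum_mset l = n - c * Suc M})"
  proof (cases "n < c * Suc M")
    case True
    have "?F2 = {}"
    proof (rule equals0I)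
      fix l assume "l \<in> ?F2"
      then have "l \<in> ?F" "Suc M \<in># l" by auto
      then have "Suc M \<le> sum_mset l" using mem_le_sum by blast
      then have "c * Suc M \<le> c * sum_mset l" by (rule mult_le_mono2)
      then have "c * Suc M \<le> n" using \<open>l \<in> ?F\<close> by simp
      with True show False by simp
    qed
    then have "card ?F2 = 0" by (simp only: card.empty)
    then show ?thesis by (subst if_P[OF True])
  next
    case False
    let ?G = "{l. (\<forall>p\<in>#l. M < p) \<and> c * sum_mset l = n - c * Suc M}"
    have eqF2: "?F2 = add_mset (Suc M) ` ?G"
    proof (rule subset_antisym; rule subsetI)
      fix l assume "l \<in> ?F2"
      then have l: "l \<in> ?F" "Suc M \<in># l" by auto
      have "l = add_mset (Suc M) (l - {#Suc M#})" using l(2) by simp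
      moreover have "l - {#Suc M#} \<in> ?G"
      proof -
        have "sum_mset l = Suc M + sum_mset (l - {#Suc M#})"
          using l(2) by (rule sum_mset.remove)
        then have "n = c * Suc M + c * sum_mset (l - {#Suc M#})" using l(1)
          by (simp only: add_mult_distrib2 mem_Collect_eq)
        then have "c * sum_mset (l - {#Suc M#}) = n - c * Suc M" by linarith
        moreover have "\<forall>p\<in>#l - {#Suc M#}. M < p"
        proof
          fix p assume "p \<in># l - {#Suc M#}"
          then have "p \<in># l" by (rule in_diffD)
          then show "M < p" using l(1) by simp
        qed
        ultimately show ?thesis by simp
      qed
      ultimately show "l \<in> add_mset (Suc M) ` ?G" by blast
    next
      fix l' assume "l' \<in> add_mset (Suc M) ` ?G"
      then obtain l where l': "l' = add_mset (Suc M) l" and "l \<in> ?G" by blast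
      then have "(\<forall>p\<in>#l. M < p)" "c * sum_mset l = n - c * Suc M" by auto
      then have a: "\<forall>p\<in>#add_mset (Suc M) l. M < p" and
        cl: "c * sum_mset l = n - c * Suc M" by simp_all
      have b: "c * sum_mset (add_mset (Suc M) l) = c * Suc M + c * sum_mset l"
        by (simp add: add_mult_distrib2)
      have "c * sum_mset (add_mset (Suc M) l) = n" unfolding b cl using False by linarith
      then have "add_mset (Suc M) l \<in> ?F2" using a by simp
      then show "l' \<in> ?F2" using l' by simp
    qed
    have "inj_on (add_mset (Suc M)) ?G" by (rule inj_onI) simp
    then have "card (add_mset (Suc M) ` ?G) = card ?G" by (rule card_image)
    then show ?thesis by (subst if_not_P[OF False]) (simp only: eqF2)
  qed
  show "Qs c M $ n = (Qs c (Suc M) + fps_X^(c * Suc M) * Qs c M) $ n"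
    unfolding fps_add_nth fps_X_power_mult_nth Qs_nth cF cF2 by simp
qed



lemma ser_empty: "ser {} w s = 0"
  by (rule fps_ext) (simp add: ser_nth)

lemma ser_insert:
  assumes "finite X" "a \<notin> X" "0 \<le> w a"
  shows "ser (insert a X) w s = ser X w s + fps_const (s a) * fps_X ^ nat (w a)"
proof (rule fps_ext)
  fix n
  have fin: "finite {x\<in>X. w x = int n}" using assms(1) by simp
  show "ser (insert a X) w s $ n = (ser X w s + fps_const (s a) * fps_X ^ nat (w a)) $ n"
  proof (cases "w a = int n")
    case True
    then have "{x\<in>insert a X. w x = int n} = insert a {x\<in>X. w x = int n}" by auto
    moreover have "n = nat (w a)" using True by simp
    ultimately show ?thesis unfolding ser_nth using assms fin by (simp add: sum.insert ser_nth)
  next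
    case False
    then have "{x\<in>insert a X. w x = int n} = {x\<in>X. w x = int n}" by auto
    moreover have "n \<noteq> nat (w a)" using False assms(3) by auto
    ultimately show ?thesis unfolding ser_nth by (simp add: ser_nth)
  qed
qed

lemma sg_pos: "sg (int i) = (-1)^i"
  unfolding sg_def by (simp add: even_of_nat_iff)

lemma sg_neg: "sg (- int i) = (-1)^i"
  unfolding sg_def by (simp add: even_of_nat_iff)

lemma fps_const_m1: "fps_const ((-1::int)^i) = (-1)^i"
  by (simp flip: fps_const_power fps_const_neg)

lemma Rh_ser: "Rh ((fps_X::int fps)^c) M = ser {j. \<bar>j\<bar> \<le> int M} (\<lambda>j. int c * pent j) sg"
proof (induction M)
  case 0
  have "{j::int. \<bar>j\<bar> \<le> int 0} = insert 0 {}" by auto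
  then show ?case
    by (simp add: Rh_def ser_insert ser_empty sg_def pent_def)
next
  case (Suc M)
  let ?x = "(fps_X::int fps)^c" and ?w = "\<lambda>j. int c * pent j"
  let ?S = "{j. \<bar>j\<bar> \<le> int M}"
  have S: "{j. \<bar>j\<bar> \<le> int (Suc M)} = insert (int (Suc M)) (insert (- int (Suc M)) ?S)" by auto
  have finS: "finite ?S"
  proof -
    have "?S = {- int M..int M}" by auto
    then show ?thesis by simp
  qed
  have w1: "?w (int (Suc M)) = int (c * e1 (Suc M))" using pent_pos[of "Suc M"] by (simp del: of_nat_Suc)
  have w2: "?w (- int (Suc M)) = int (c * e2 (Suc M))" using pent_neg[of "Suc M"] by (simp del: of_nat_Suc)
  have "ser {j. \<bar>j\<bar> \<le> int (Suc M)} ?w sg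
     = ser ?S ?w sg + fps_const (sg (- int (Suc M))) * fps_X ^ nat (?w (- int (Suc M)))
       + fps_const (sg (int (Suc M))) * fps_X ^ nat (?w (int (Suc M)))"
  proof -
    have n1: "0 \<le> ?w (int (Suc M))" by (simp only: w1)
    have n2: "0 \<le> ?w (- int (Suc M))" by (simp only: w2)
    have i1: "ser (insert (int (Suc M)) (insert (- int (Suc M)) ?S)) ?w sg = ser (insert (- int (Suc M)) ?S) ?w sg + fps_const (sg (int (Suc M))) * fps_X ^ nat (?w (int (Suc M)))"
      by (rule ser_insert) (use finS n1 in auto)
    have i2: "ser (insert (- int (Suc M)) ?S) ?w sg = ser ?S ?w sg + fps_const (sg (- int (Suc M))) * fps_X ^ nat (?w (- int (Suc M)))"
      by (rule ser_insert) (use finS n2 in auto)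
    show ?thesis unfolding S i1 i2 ..
  qed
  also have "\<dots> = Rh ?x M + (-1)^(Suc M) * (?x^(e1 (Suc M)) + ?x^(e2 (Suc M)))"
    unfolding w1 w2 nat_int sg_pos sg_neg fps_const_m1 Suc.IH[symmetric]
    by (simp add: power_mult algebra_simps)
  also have "\<dots> = Rh ?x (Suc M)"
    unfolding Rh_def by (simp add: sum.cl_ivl_Suc)
  finally show ?case by simp
qed

definition Fser :: "nat \<Rightarrow> int fps" where
  "Fser c = ser UNIV (\<lambda>j. int c * pent j) sg"

lemma Qs_pp: assumes "0 < c" shows "Pser c * pp ((fps_X::int fps)^c) 1 M = Qs c M"
proof (induction M)
  case 0 then show ?case by (simp add: pp_empty Qs0)
next
  case (Suc M)
  have pw: "((fps_X::int fps)^c)^(Suc M) = fps_X^(c * Suc M)" by (simp only: power_mult)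
  have "pp ((fps_X::int fps)^c) 1 (Suc M) = pp (fps_X^c) 1 M * (1 - ((fps_X::int fps)^c)^(Suc M))"
    by (rule pp_Suc_right) simp
  then have "pp ((fps_X::int fps)^c) 1 (Suc M) = pp (fps_X^c) 1 M * (1 - fps_X^(c * Suc M))"
    by (simp only: pw)
  then have "Pser c * pp ((fps_X::int fps)^c) 1 (Suc M) = (Pser c * pp (fps_X^c) 1 M) * (1 - fps_X^(c * Suc M))"
    by (simp only: mult.assoc)
  also have "\<dots> = Qs c M - fps_X^(c * Suc M) * Qs c M"
    unfolding Suc.IH by (simp add: algebra_simps)
  also have "\<dots> = Qs c (Suc M)" using Qstep[OF assms, of M] by (simp add: algebra_simps)
  finally show ?case .
qed

lemma Qs_low: assumes "0 < c" "n \<le> M" shows "Qs c M $ n = (if n = 0 then 1 else 0)"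
proof -
  have ne: "l = {#}" if l: "l \<in> {l. (\<forall>p\<in>#l. M < p) \<and> c * sum_mset l = n}" for l
  proof (rule ccontr)
    assume "l \<noteq> {#}"
    then obtain p where p: "p \<in># l" by (metis multiset_nonemptyE)
    then have "p \<le> sum_mset l" by (rule mem_le_sum)
    also have "\<dots> \<le> c * sum_mset l" using assms(1) by simp
    finally have "p \<le> n" using l by simp
    moreover have "M < p" using l p by auto
    ultimately show False using assms(2) by simp
  qed
  have "l \<in> {l. (\<forall>p\<in>#l. M < p) \<and> c * sum_mset l = n} \<longleftrightarrow> l = {#} \<and> n = 0" for l
    using ne[of l] by auto
  then have "{l. (\<forall>p\<in>#l. M < p) \<and> c * sum_mset l = n} = (if n = 0 then {{#}} else {})"
    by auto
  then show ?thesis unfolding Qs_nth by simp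
qed

lemma Sh_agree: assumes "0 < c" "j \<le> M"
  shows "Sh ((fps_X::int fps)^c) M $ j = pp ((fps_X::int fps)^c) 1 M $ j"
proof -
  let ?x = "(fps_X::int fps)^c"
  have "Sh ?x M = Tm ?x M 0 + (\<Sum>k\<in>{Suc 0..M}. Tm ?x M k)"
    unfolding Sh_def atMost_atLeast0 by (simp add: sum.atLeast_Suc_atMost)
  moreover have "Tm ?x M 0 = pp ?x 1 M" by (simp add: Tm_def)
  moreover have "Tm ?x M k $ j = 0" if k: "k \<in> {Suc 0..M}" for k
  proof -
    have pw: "?x^(k*M + tri k) = fps_X^(c * (k*M + tri k))" by (simp only: power_mult)
    have "Tm ?x M k = fps_X^(c * (k*M + tri k)) * ((-1)^k * pp ?x (Suc k) M)"
      unfolding Tm_def pw[symmetric] by (simp add: algebra_simps)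
    moreover have "j < c * (k*M + tri k)"
    proof -
      have "1 \<le> k" using k by simp
      then have "M \<le> k * M" by simp
      moreover have "1 \<le> tri k" using tri_ge[of k] \<open>1 \<le> k\<close> by simp
      ultimately have "j < k*M + tri k" using assms(2) by linarith
      also have "\<dots> \<le> c * (k*M + tri k)" using assms(1) by simp
      finally show ?thesis .
    qed
    ultimately show ?thesis by (simp add: fps_X_power_mult_nth)
  qed
  ultimately show ?thesis by (simp add: fps_sum_nth)
qed

lemma F_agree: assumes "0 < c" "n \<le> M"
  shows "ser {j. \<bar>j\<bar> \<le> int M} (\<lambda>j. int c * pent j) sg $ n = Fser c $ n"
proof -
  have "{x \<in> {j. \<bar>j\<bar> \<le> int M}. int c * pent x = int n} = {x \<in> UNIV. int c * pent x = int n}"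
  proof safe
    fix x assume x: "int c * pent x = int n"
    have "0 \<le> pent x" using pent_ge[of x] by simp
    then have "1 * pent x \<le> int c * pent x" using assms(1) by (intro mult_right_mono) auto
    then show "\<bar>x\<bar> \<le> int M" using pent_ge[of x] x assms(2) by simp
  qed simp
  then show ?thesis unfolding Fser_def ser_nth by simp
qed

lemma Euler: assumes "0 < c" shows "Pser c * Fser c = 1"
proof (rule fps_ext)
  fix n
  let ?x = "(fps_X::int fps)^c"
  have "(Pser c * Fser c) $ n = (\<Sum>i=0..n. Pser c $ i * Fser c $ (n - i))"
    by (rule fps_mult_nth)
  also have "\<dots> = (\<Sum>i=0..n. Pser c $ i * pp ?x 1 n $ (n - i))"
  proof (rule sum.cong)
    fix i assume "i \<in> {0..n}"
    have "Fser c $ (n - i) = ser {j. \<bar>j\<bar> \<le> int n} (\<lambda>j. int c * pent j) sg $ (n - i)"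
      using F_agree[OF assms, of "n - i" n] by simp
    also have "\<dots> = Sh ?x n $ (n - i)" by (simp add: Shanks Rh_ser)
    also have "\<dots> = pp ?x 1 n $ (n - i)" by (rule Sh_agree[OF assms]) simp
    finally show "Pser c $ i * Fser c $ (n - i) = Pser c $ i * pp ?x 1 n $ (n - i)" by simp
  qed simp
  also have "\<dots> = (Pser c * pp ?x 1 n) $ n" by (simp add: fps_mult_nth)
  also have "\<dots> = Qs c n $ n" by (simp only: Qs_pp[OF assms])
  also have "\<dots> = 1 $ n" using Qs_low[OF assms, of n n] by simp
  finally show "(Pser c * Fser c) $ n = 1 $ n" .
qed



lemma binom2_2: "2 * binom2 d = d * (d - 1)"
proof -
  have "even (d * (d - 1))" by simp
  then show ?thesis unfolding binom2_def by simp
qed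

lemma term_nonneg:
  fixes Cc a d :: int assumes "1 \<le> Cc" "0 \<le> a" "2*a \<le> Cc"
  shows "0 \<le> Cc*binom2 d + a*d"
proof -
  have "0 \<le> Cc * (d*(d-1)) + 2*a*d"
  proof (cases "d \<ge> 1")
    case True
    then have "0 \<le> d*(d-1)" by simp
    then have "0 \<le> Cc * (d*(d-1))" using assms by simp
    moreover have "0 \<le> 2*a*d" using True assms by simp
    ultimately show ?thesis by simp
  next
    case False
    then have d: "d \<le> 0" by simp
    have f1: "Cc * d \<le> 2*a*d" using d assms(3) by (simp add: mult_right_mono_neg)
    have f2: "0 \<le> Cc * (d*d)" using assms by simp
    have f3: "Cc*(d*(d-1)) = Cc*(d*d) - Cc*d" by (simp add: algebra_simps)
    show ?thesis using f1 f2 f3 by linarith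
  qed
  moreover have "2*(Cc*binom2 d + a*d) = Cc*(2*binom2 d) + 2*a*d" by (simp add: algebra_simps)
  ultimately have "0 \<le> 2 * (Cc*binom2 d + a*d)" unfolding binom2_2 by linarith
  then show ?thesis by simp
qed

lemma term_bound:
  fixes Cc a d :: int assumes "1 \<le> Cc" "0 \<le> a" "2*a \<le> Cc"
  shows "\<bar>d\<bar> \<le> 2*(Cc*binom2 d + a*d) + 1"
proof -
  have "\<bar>d\<bar> \<le> Cc * (d*(d-1)) + 2*a*d + 1"
  proof (cases "d \<ge> 1")
    case True
    have f1: "d-1 \<le> d*(d-1)" using True mult_right_mono[of 1 d "d-1"] by simp
    have f2: "d*(d-1) \<le> Cc * (d*(d-1))" using assms True mult_right_mono[of 1 Cc "d*(d-1)"] by simp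
    have f3: "0 \<le> 2*a*d" using True assms by simp
    have "\<bar>d\<bar> = d" using True by simp
    moreover have g: "d - 1 \<le> Cc*(d*(d-1))" by (rule order_trans[OF f1 f2])
    ultimately show ?thesis using f3 by linarith
  next
    case False
    then have d: "d \<le> 0" by simp
    have f1: "Cc * d \<le> 2*a*d" using d assms(3) by (simp add: mult_right_mono_neg)
    have f2: "1*(d*d) \<le> Cc * (d*d)" using assms by (intro mult_right_mono) auto
    have f4: "-d \<le> d*d"
    proof (cases "d = 0")
      case False
      then have "1 \<le> -d" using d by simp
      then have "1*(-d) \<le> (-d)*(-d)" by (intro mult_right_mono) auto
      then show ?thesis by simp
    qed simp
    have f3: "Cc*(d*(d-1)) = Cc*(d*d) - Cc*d" by (simp add: algebra_simps)
    show ?thesis using f1 f2 f3 f4 d by linarith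
  qed
  moreover have "2*(Cc*binom2 d + a*d) = Cc*(2*binom2 d) + 2*a*d" by (simp add: algebra_simps)
  ultimately show ?thesis unfolding binom2_2 by linarith
qed

lemma sg_add: "sg (a + b) = sg a * sg b"
  unfolding sg_def by auto

lemma sg_sum: fixes t :: nat shows "(\<Prod>i<t. sg (f i)) = sg (\<Sum>i<t. f i)"
  by (induction t) (auto simp: sg_add sg_def)

lemma pent_nonneg: "0 \<le> pent j"
  using pent_ge[of j] by simp

lemma fin_fib:
  fixes t :: nat and g :: "nat \<Rightarrow> int \<Rightarrow> int"
  assumes "\<forall>i<t. \<forall>x. 0 \<le> g i x \<and> \<bar>x\<bar> \<le> 2 * g i x + 1"
  shows "finite {d \<in> PiE {..<t} (\<lambda>_. UNIV). (\<Sum>i<t. g i (d i)) = N}"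
proof (rule finite_subset)
  show "{d \<in> PiE {..<t} (\<lambda>_. UNIV). (\<Sum>i<t. g i (d i)) = N} \<subseteq> PiE {..<t} (\<lambda>_. {-(2*N+1)..2*N+1})"
  proof
    fix d assume d: "d \<in> {d \<in> PiE {..<t} (\<lambda>_. UNIV). (\<Sum>i<t. g i (d i)) = N}"
    have "d i \<in> {-(2*N+1)..2*N+1}" if i: "i < t" for i
    proof -
      have "g i (d i) \<le> (\<Sum>j<t. g j (d j))"
        by (rule member_le_sum) (use i assms in auto)
      then have "g i (d i) \<le> N" using d by simp
      moreover have "\<bar>d i\<bar> \<le> 2 * g i (d i) + 1" using assms i by auto
      ultimately show ?thesis by auto
    qed
    then show "d \<in> PiE {..<t} (\<lambda>_. {-(2*N+1)..2*N+1})" using d by (auto simp: PiE_iff)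
  qed
  show "finite (PiE {..<t} (\<lambda>_. {-(2*N+1)..2*N+1}))" by (rule finite_PiE) auto
qed

lemma good_P: assumes "0 < c" shows "good partitions (\<lambda>l. int c * int (psize l))"
proof -
  have "finite {x \<in> partitions. int c * int (psize x) = n}" for n
  proof (cases "n < 0")
    case True
    have "{x \<in> partitions. int c * int (psize x) = n} = {}"
    proof (rule equals0I)
      fix x assume "x \<in> {x \<in> partitions. int c * int (psize x) = n}"
      then have "n = int c * int (psize x)" by simp
      moreover have "0 \<le> int c * int (psize x)" by simp
      ultimately show False using True by linarith
    qed
    then show ?thesis by (metis finite.emptyI)
  next
    case False
    then obtain k where k: "n = int k" by (metis nonneg_int_cases not_less)
    have "{x \<in> partitions. int c * int (psize x) = n} \<subseteq> {l. (\<forall>p\<in>#l. 0 < p) \<and> c * sum_mset l = k}"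
    proof
      fix x assume "x \<in> {x \<in> partitions. int c * int (psize x) = n}"
      then have "x \<in> partitions" "int (c * psize x) = int k" using k by auto
      then show "x \<in> {l. (\<forall>p\<in>#l. 0 < p) \<and> c * sum_mset l = k}"
        unfolding partitions_def psize_def by (simp only: of_nat_eq_iff) simp
    qed
    then show ?thesis using fin_Q[OF assms, of 0 k] finite_subset by blast
  qed
  then show ?thesis unfolding good_def by auto
qed

lemma good_F: assumes "0 < c" shows "good UNIV (\<lambda>j. int c * pent j)"
proof -
  have "finite {x \<in> UNIV. int c * pent x = n}" for n
  proof (rule finite_subset)
    show "{x \<in> UNIV. int c * pent x = n} \<subseteq> {-n..n}"
    proof
      fix x assume x: "x \<in> {x \<in> UNIV. int c * pent x = n}"
      have "0 \<le> pent x" by (rule pent_nonneg)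
      then have "1 * pent x \<le> int c * pent x" using assms by (intro mult_right_mono) auto
      then show "x \<in> {-n..n}" using pent_ge[of x] x by auto
    qed
  qed simp
  moreover have "0 \<le> int c * pent x" for x using pent_nonneg[of x] by simp
  ultimately show ?thesis unfolding good_def by auto
qed

lemma Ptot:
  fixes t :: nat assumes "\<forall>i<t. 1 \<le> C i"
  shows "ser (PiE {..<t} (\<lambda>_. partitions)) (\<lambda>mu. \<Sum>i<t. C i * int (psize (mu i))) (\<lambda>_. 1)
           = (\<Prod>i<t. Pser (nat (C i)))
        \<and> good (PiE {..<t} (\<lambda>_. partitions)) (\<lambda>mu. \<Sum>i<t. C i * int (psize (mu i)))"
proof -
  have g: "\<And>i. i < t \<Longrightarrow> good ((\<lambda>_. partitions) i) ((\<lambda>i l. int (nat (C i)) * int (psize l)) i)"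
  proof -
    fix i assume i: "i < t"
    show "good ((\<lambda>_. partitions) i) ((\<lambda>i l. int (nat (C i)) * int (psize l)) i)"
      by (rule good_P) (use assms i in auto)
  qed
  note r = ser_PiE[of t "\<lambda>_. partitions" "\<lambda>i l. int (nat (C i)) * int (psize l)" "\<lambda>i _. 1", OF g]
  have w: "(\<Sum>i<t. int (nat (C i)) * int (psize (mu i))) = (\<Sum>i<t. C i * int (psize (mu i)))" for mu
    by (rule sum.cong) (use assms in auto)
  show ?thesis using r unfolding w by (simp add: Pser_def)
qed

lemma Ftot:
  fixes t :: nat assumes "\<forall>i<t. 1 \<le> C i"
  shows "ser (PiE {..<t} (\<lambda>_. UNIV)) (\<lambda>f. \<Sum>i<t. C i * pent (f i)) (\<lambda>f. sg (\<Sum>i<t. f i))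
           = (\<Prod>i<t. Fser (nat (C i)))
        \<and> good (PiE {..<t} (\<lambda>_. UNIV)) (\<lambda>f. \<Sum>i<t. C i * pent (f i))"
proof -
  have g: "\<And>i. i < t \<Longrightarrow> good ((\<lambda>_. UNIV) i) ((\<lambda>i j. int (nat (C i)) * pent j) i)"
  proof -
    fix i assume i: "i < t"
    show "good ((\<lambda>_. UNIV) i) ((\<lambda>i j. int (nat (C i)) * pent j) i)"
      by (rule good_F) (use assms i in auto)
  qed
  note r = ser_PiE[of t "\<lambda>_. UNIV" "\<lambda>i j. int (nat (C i)) * pent j" "\<lambda>i j. sg j", OF g]
  have w: "(\<Sum>i<t. int (nat (C i)) * pent (f i)) = (\<Sum>i<t. C i * pent (f i))" for f
    by (rule sum.cong) (use assms in auto)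
  show ?thesis using r unfolding w sg_sum by (simp add: Fser_def)
qed

lemma PF:
  fixes t :: nat assumes "\<forall>i<t. 1 \<le> C i"
  shows "(\<Prod>i<t. Pser (nat (C i))) * (\<Prod>i<t. Fser (nat (C i))) = 1"
proof -
  have "(\<Prod>i<t. Pser (nat (C i))) * (\<Prod>i<t. Fser (nat (C i))) = (\<Prod>i<t. Pser (nat (C i)) * Fser (nat (C i)))"
    by (simp add: prod.distrib)
  also have "\<dots> = (\<Prod>i<t. 1)" by (rule prod.cong) (use assms Euler in auto)
  finally show ?thesis by simp
qed



lemma ser_card: "ser X w (\<lambda>_. 1) $ n = int (card {x\<in>X. w x = int n})"
  by (simp add: ser_nth)

lemma ser_ind: assumes "finite {x\<in>X. w x = int n}"
  shows "ser X w (\<lambda>x. if P x then 1 else 0) $ n = int (card {x\<in>X. w x = int n \<and> P x})"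
proof -
  have "ser X w (\<lambda>x. if P x then 1 else 0) $ n = (\<Sum>x\<in>{x\<in>X. w x = int n}. if P x then 1 else 0)"
    by (simp add: ser_nth)
  also have "\<dots> = (\<Sum>x\<in>{x\<in>{x\<in>X. w x = int n}. P x}. 1)"
    by (rule sum.inter_filter[symmetric]) (rule assms)
  also have "{x\<in>{x\<in>X. w x = int n}. P x} = {x\<in>X. w x = int n \<and> P x}" by auto
  finally show ?thesis by simp
qed

lemma ser_diff: "ser X w (\<lambda>x. s1 x - s2 x) = ser X w s1 - ser X w s2"
  by (rule fps_ext) (simp add: ser_nth sum_subtractf)

lemma least_int:
  fixes P :: "int \<Rightarrow> bool"
  assumes "P x" "\<forall>y. P y \<longrightarrow> b \<le> y"
  shows "P (LEAST y. P y) \<and> (\<forall>y. P y \<longrightarrow> (LEAST y. P y) \<le> y)"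
proof -
  define n0 where "n0 = (LEAST n::nat. P (b + int n))"
  have ex: "P (b + int (nat (x - b)))" using assms by simp
  then have P0: "P (b + int n0)" unfolding n0_def by (rule LeastI)
  have min: "b + int n0 \<le> y" if "P y" for y
  proof -
    have "b \<le> y" using assms that by auto
    then have "P (b + int (nat (y - b)))" using that by simp
    then have "n0 \<le> nat (y - b)" unfolding n0_def by (rule Least_le)
    then show ?thesis using \<open>b \<le> y\<close> by linarith
  qed
  have "(LEAST y. P y) = b + int n0"
    by (rule Least_equality) (use P0 min in auto)
  then show ?thesis using P0 min by simp
qed



lemma alg_equiv:
  fixes P F a b K :: "int fps"
  assumes "P * F = 1"
  shows "(P * a - P * b = K) \<longleftrightarrow> (a - b = K * F)"
proof
  assume h: "P * a - P * b = K"
  have "a - b = (P * F) * (a - b)" using assms by simp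
  also have "\<dots> = F * (P * a - P * b)" by (simp add: algebra_simps)
  finally show "a - b = K * F" using h by (simp add: mult.commute)
next
  assume h: "a - b = K * F"
  have "P * a - P * b = P * (a - b)" by (simp add: algebra_simps)
  also have "\<dots> = K * (P * F)" unfolding h by (simp add: algebra_simps)
  finally show "P * a - P * b = K" using assms by simp
qed

lemma sum_restrict: "(\<Sum>i<t. g (restrict f {..<t} i)) = (\<Sum>i<t. g (f i))"
  by (rule sum.cong) auto

lemma d0_facts:
  fixes t :: nat and C A :: "nat \<Rightarrow> int" assumes "1 \<le> t"
  defines "d0 \<equiv> restrict (\<lambda>i. if i = 0 then (1::int) else 0) {..<t}"
  shows "d0 \<in> PiE {..<t} (\<lambda>_. UNIV)" "(\<Sum>i<t. d0 i) = 1"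
    "(\<Sum>i<t. C i * binom2 (d0 i)) = 0" "(\<Sum>i<t. A i * d0 i) = A 0"
proof -
  show "d0 \<in> PiE {..<t} (\<lambda>_. UNIV)" unfolding d0_def by simp
  have z: "0 \<in> {..<t}" using assms by auto
  show "(\<Sum>i<t. d0 i) = 1" unfolding d0_def sum_restrict[of "\<lambda>x. x"] using z by simp
  have "binom2 1 = 0" "binom2 0 = 0" by (simp_all add: binom2_def)
  then have "C i * binom2 (if i = 0 then 1 else 0) = 0" for i by simp
  then have "(\<Sum>i<t. C i * binom2 (d0 i)) = (\<Sum>i<t. (0::int))"
    unfolding d0_def by (intro sum.cong) auto
  then show "(\<Sum>i<t. C i * binom2 (d0 i)) = 0" by simp
  have "(\<Sum>i<t. A i * d0 i) = (\<Sum>i<t. if i = 0 then A i else 0)"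
    unfolding d0_def by (rule sum.cong) auto
  then show "(\<Sum>i<t. A i * d0 i) = A 0" using z by simp
qed

theorem lemma3p8:
  fixes t :: nat and C A B :: "nat \<Rightarrow> int" and m k :: int
  assumes "t \<ge> 1"
    and "\<forall>i<t. C i \<ge> 1"
    and "\<forall>i<t. 0 \<le> A i \<and> 2 * A i \<le> C i"
    and "\<forall>i<t. 0 \<le> B i \<and> 2 * B i \<le> C i"
    and k_def: "k = (LEAST N. Sset t C A N \<noteq> {})"
    and "(LEAST N. Tset t C B m N \<noteq> {}) = (LEAST N. k < N \<and> Sset t C A N \<noteq> {})"
  shows "(\<forall>N>k. card (Sset t C A N) = card (Tset t C B m N))
         \<longleftrightarrow> (\<forall>N. uN t C A k N = vN t C A B m k N)"
proof -
  note t1 = assms(1) and Cpos = assms(2) and Ab = assms(3) and Bb = assms(4) and hyp = assms(6)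
  define Mset where "Mset = PiE {..<t} (\<lambda>_. partitions)"
  define wM where "wM = (\<lambda>mu::nat \<Rightarrow> nat multiset. \<Sum>i<t. C i * int (psize (mu i)))"
  define Fset where "Fset = PiE {..<t} (\<lambda>_. UNIV::int set)"
  define Dodd where "Dodd = {d \<in> Fset. odd (\<Sum>i<t. d i)}"
  define wA where "wA = (\<lambda>d. (\<Sum>i<t. C i * binom2 (d i)) + (\<Sum>i<t. A i * d i))"
  define wB where "wB = (\<lambda>d. (\<Sum>i<t. C i * binom2 (d i)) + (\<Sum>i<t. B i * d i) + m)"
  define wF where "wF = (\<lambda>f. \<Sum>i<t. C i * pent (f i))"
  define Ptot where "Ptot = ser Mset wM (\<lambda>_. 1)"
  define Fs where "Fs = ser Fset wF (\<lambda>f. sg (\<Sum>i<t. f i))"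
  define ThA where "ThA = ser Dodd wA (\<lambda>_. 1)"
  define ThB where "ThB = ser Dodd wB (\<lambda>_. 1)"
  define Es where "Es = ser Fset wF (\<lambda>f. if even (\<Sum>i<t. f i) then 1 else 0)"
  define Os where "Os = ser Fset wF (\<lambda>f. if odd (\<Sum>i<t. f i) then 1 else 0)"
  define gA where "gA = (\<lambda>i x. C i * binom2 x + A i * x)"
  define gB where "gB = (\<lambda>i x. C i * binom2 x + B i * x)"

  have gAb: "\<forall>i<t. \<forall>x. 0 \<le> gA i x \<and> \<bar>x\<bar> \<le> 2 * gA i x + 1"
    unfolding gA_def using Cpos Ab term_nonneg term_bound by blast
  have gBb: "\<forall>i<t. \<forall>x. 0 \<le> gB i x \<and> \<bar>x\<bar> \<le> 2 * gB i x + 1"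
    unfolding gB_def using Cpos Bb term_nonneg term_bound by blast
  have wA_g: "wA d = (\<Sum>i<t. gA i (d i))" for d
    unfolding wA_def gA_def by (simp add: sum.distrib)
  have wB_g: "wB d = (\<Sum>i<t. gB i (d i)) + m" for d
    unfolding wB_def gB_def by (simp add: sum.distrib)
  have wA_nn: "0 \<le> wA d" for d unfolding wA_g using gAb by (intro sum_nonneg) auto
  have wB_m: "m \<le> wB d" for d
  proof -
    have "0 \<le> (\<Sum>i<t. gB i (d i))" using gBb by (intro sum_nonneg) auto
    then show ?thesis unfolding wB_g by simp
  qed
  have wM_nn: "0 \<le> wM mu" for mu unfolding wM_def using Cpos by (intro sum_nonneg) auto
  have wF_nn: "0 \<le> wF f" for f unfolding wF_def using Cpos pent_nonneg by (intro sum_nonneg) auto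

  have PT: "Ptot = (\<Prod>i<t. Pser (nat (C i)))" and gM: "good Mset wM"
    using Ptot[OF Cpos] unfolding Ptot_def Mset_def wM_def by auto
  have FT: "Fs = (\<Prod>i<t. Fser (nat (C i)))" and gF: "good Fset wF"
    using Ftot[OF Cpos] unfolding Fs_def Fset_def wF_def by auto
  have PF1: "Ptot * Fs = 1" unfolding PT FT by (rule PF[OF Cpos])
  have finF: "finite {x\<in>Fset. wF x = j}" for j using gF unfolding good_def by auto

  have gA: "good Dodd wA"
  proof -
    have "finite {d\<in>Dodd. wA d = N}" for N
    proof (rule finite_subset)
      show "{d\<in>Dodd. wA d = N} \<subseteq> {d \<in> PiE {..<t} (\<lambda>_. UNIV). (\<Sum>i<t. gA i (d i)) = N}"
        unfolding Dodd_def Fset_def wA_g by auto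
    qed (rule fin_fib[OF gAb])
    then show ?thesis unfolding good_def using wA_nn by auto
  qed

  have Sset_eq: "Sset t C A N = {p \<in> Mset \<times> Dodd. wM (fst p) + wA (snd p) = N}" for N
  proof (rule set_eqI)
    fix p :: "(nat \<Rightarrow> nat multiset) \<times> (nat \<Rightarrow> int)"
    obtain mu d where p: "p = (mu, d)" by fastforce
    show "p \<in> Sset t C A N \<longleftrightarrow> p \<in> {p \<in> Mset \<times> Dodd. wM (fst p) + wA (snd p) = N}"
      unfolding p Sset_def Mset_def Dodd_def Fset_def wM_def wA_def by (simp add: add.assoc)
  qed
  have Tset_eq: "Tset t C B m N = {p \<in> Mset \<times> Dodd. wM (fst p) + wB (snd p) = N}" for N
  proof (rule set_eqI)
    fix p :: "(nat \<Rightarrow> nat multiset) \<times> (nat \<Rightarrow> int)"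
    obtain mu d where p: "p = (mu, d)" by fastforce
    show "p \<in> Tset t C B m N \<longleftrightarrow> p \<in> {p \<in> Mset \<times> Dodd. wM (fst p) + wB (snd p) = N}"
      unfolding p Tset_def Mset_def Dodd_def Fset_def wM_def wB_def by (simp add: add.assoc)
  qed
  have S_nn: "0 \<le> N" if "Sset t C A N \<noteq> {}" for N
    using that wM_nn wA_nn unfolding Sset_eq by fastforce
  define d0 where "d0 = restrict (\<lambda>i. if i = 0 then (1::int) else 0) {..<t}"
  define mu0 where "mu0 = restrict (\<lambda>i. ({#}::nat multiset)) {..<t}"
  note d0f = d0_facts[OF t1, folded d0_def]
  have d0D: "d0 \<in> Dodd" unfolding Dodd_def Fset_def using d0f by simp
  have mu0M: "mu0 \<in> Mset" unfolding Mset_def mu0_def partitions_def by simp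
  have wM0: "wM mu0 = 0" unfolding wM_def mu0_def psize_def
    by (simp add: sum_restrict[of "\<lambda>x. x"] sum.cong[of "{..<t}" "{..<t}" "\<lambda>i. C i * int (sum_mset (restrict (\<lambda>i. {#}) {..<t} i))" "\<lambda>_. 0"])
  have wA0: "wA d0 = A 0" unfolding wA_def using d0f by simp
  have "(mu0, d0) \<in> Sset t C A (A 0)" unfolding Sset_eq using mu0M d0D wM0 wA0 by simp
  then have Sex: "Sset t C A (A 0) \<noteq> {}" by blast
  have kprop: "Sset t C A k \<noteq> {} \<and> (\<forall>N. Sset t C A N \<noteq> {} \<longrightarrow> k \<le> N)"
    unfolding k_def by (rule least_int[of "\<lambda>N. Sset t C A N \<noteq> {}", OF Sex]) (use S_nn in auto)
  have k0: "0 \<le> k" using kprop S_nn by blast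
  define mu1 where "mu1 = restrict (\<lambda>i. if i = 0 then replicate_mset (nat k + 1) (1::nat) else {#}) {..<t}"
  have mu1M: "mu1 \<in> Mset" unfolding Mset_def mu1_def partitions_def by auto
  have wM1: "wM mu1 = C 0 * int (nat k + 1)"
  proof -
    have "wM mu1 = (\<Sum>i<t. if i = 0 then C 0 * int (nat k + 1) else 0)"
      unfolding wM_def mu1_def psize_def by (rule sum.cong) auto
    also have "\<dots> = C 0 * int (nat k + 1)" using t1 by simp
    finally show ?thesis .
  qed
  have "k < wM mu1 + A 0"
  proof -
    have e: "int (nat k + 1) = k + 1" using k0 by simp
    have "k + 1 \<le> C 0 * (k + 1)" using mult_right_mono[of 1 "C 0" "k+1"] Cpos t1 k0 by simp
    moreover have "0 \<le> A 0" using Ab t1 by auto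
    ultimately show ?thesis unfolding wM1 e by linarith
  qed
  moreover have "(mu1, d0) \<in> Sset t C A (wM mu1 + A 0)" unfolding Sset_eq using mu1M d0D wA0 by simp
  ultimately have S2ex: "k < wM mu1 + A 0 \<and> Sset t C A (wM mu1 + A 0) \<noteq> {}" by blast
  define L2 where "L2 = (LEAST N. k < N \<and> Sset t C A N \<noteq> {})"
  have L2prop: "k < L2"
    using least_int[of "\<lambda>N. k < N \<and> Sset t C A N \<noteq> {}", OF S2ex, of k] unfolding L2_def by auto
  have T_m: "m \<le> N" if h: "Tset t C B m N \<noteq> {}" for N
  proof -
    obtain p where "p \<in> Tset t C B m N" using h by blast
    then have "wM (fst p) + wB (snd p) = N" unfolding Tset_eq by simp
    moreover have "0 \<le> wM (fst p)" "m \<le> wB (snd p)" by (rule wM_nn, rule wB_m)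
    ultimately show ?thesis by linarith
  qed
  have "(\<Sum>i<t. B i * d0 i) = (\<Sum>i<t. if i = 0 then B i else 0)"
    unfolding d0_def by (rule sum.cong) auto
  then have "(\<Sum>i<t. B i * d0 i) = B 0" using t1 by simp
  then have wB0: "wB d0 = B 0 + m" unfolding wB_def using d0f by simp
  have "(mu0, d0) \<in> Tset t C B m (B 0 + m)" unfolding Tset_eq using mu0M d0D wM0 wB0 by simp
  then have Tex: "Tset t C B m (B 0 + m) \<noteq> {}" by blast
  have Tm': "\<forall>y. Tset t C B m y \<noteq> {} \<longrightarrow> m \<le> y" using T_m by blast
  have LT: "\<forall>N. Tset t C B m N \<noteq> {} \<longrightarrow> (LEAST N. Tset t C B m N \<noteq> {}) \<le> N"
    by (rule conjunct2[OF least_int[of "\<lambda>N. Tset t C B m N \<noteq> {}", OF Tex Tm']])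
  have Tbig: "k < N" if "Tset t C B m N \<noteq> {}" for N
  proof -
    have "(LEAST N. Tset t C B m N \<noteq> {}) \<le> N" using LT that by blast
    then have "L2 \<le> N" using hyp unfolding L2_def by simp
    then show ?thesis using L2prop by simp
  qed
  have wBk: "k < wB e" if "e \<in> Dodd" for e
  proof -
    have "(mu0, e) \<in> Tset t C B m (wB e)" unfolding Tset_eq using mu0M that wM0 by simp
    then show ?thesis using Tbig by blast
  qed
  have gB: "good Dodd wB"
  proof -
    have "finite {d\<in>Dodd. wB d = N}" for N
    proof (rule finite_subset)
      show "{d\<in>Dodd. wB d = N} \<subseteq> {d \<in> PiE {..<t} (\<lambda>_. UNIV). (\<Sum>i<t. gB i (d i)) = N - m}"
      proof
        fix d assume d: "d \<in> {d\<in>Dodd. wB d = N}"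
        then have "d \<in> PiE {..<t} (\<lambda>_. UNIV)" unfolding Dodd_def Fset_def by simp
        moreover have "(\<Sum>i<t. gB i (d i)) = N - m" using d wB_g[of d] by simp
        ultimately show "d \<in> {d \<in> PiE {..<t} (\<lambda>_. UNIV). (\<Sum>i<t. gB i (d i)) = N - m}" by simp
      qed
    qed (rule fin_fib[OF gBb])
    moreover have "\<forall>x\<in>Dodd. 0 \<le> wB x"
    proof
      fix x assume "x \<in> Dodd" then have "k < wB x" by (rule wBk)
      then show "0 \<le> wB x" using k0 by simp
    qed
    ultimately show ?thesis unfolding good_def by blast
  qed
  define kn where "kn = nat k"
  have kk: "int kn = k" unfolding kn_def using k0 by simp
  define c0 where "c0 = card (Sset t C A k)"
  define K where "K = fps_const (int c0) * (fps_X::int fps) ^ kn"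
  have Knth: "K $ n = (if n = kn then int c0 else 0)" for n unfolding K_def by simp
  have SS: "Ptot * ThA = ser (Mset \<times> Dodd) (\<lambda>p. wM (fst p) + wA (snd p)) (\<lambda>_. 1)"
    using ser_times[OF gM gA, of "\<lambda>_. 1" "\<lambda>_. 1"] unfolding Ptot_def ThA_def by simp
  have TT: "Ptot * ThB = ser (Mset \<times> Dodd) (\<lambda>p. wM (fst p) + wB (snd p)) (\<lambda>_. 1)"
    using ser_times[OF gM gB, of "\<lambda>_. 1" "\<lambda>_. 1"] unfolding Ptot_def ThB_def by simp
  have Scoef: "(Ptot * ThA) $ n = int (card (Sset t C A (int n)))" for n
    unfolding SS ser_card Sset_eq ..
  have Tcoef: "(Ptot * ThB) $ n = int (card (Tset t C B m (int n)))" for n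
    unfolding TT ser_card Tset_eq ..
  have LHS: "(\<forall>N>k. card (Sset t C A N) = card (Tset t C B m N)) \<longleftrightarrow> Ptot * ThA - Ptot * ThB = K"
  proof
    assume H: "\<forall>N>k. card (Sset t C A N) = card (Tset t C B m N)"
    show "Ptot * ThA - Ptot * ThB = K"
    proof (rule fps_ext)
      fix n
      have "int (card (Sset t C A (int n))) - int (card (Tset t C B m (int n))) = K $ n"
      proof (cases "int n \<le> k")
        case True
        have T0: "Tset t C B m (int n) = {}"
        proof (rule ccontr)
          assume "Tset t C B m (int n) \<noteq> {}"
          then have "k < int n" by (rule Tbig)
          with True show False by simp
        qed
        show ?thesis
        proof (cases "n = kn")
          case True
          then show ?thesis using T0 kk unfolding Knth c0_def by simp
        next
          case False
          then have "int n < k" using \<open>int n \<le> k\<close> kk by auto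
          have "Sset t C A (int n) = {}"
          proof (rule ccontr)
            assume "Sset t C A (int n) \<noteq> {}"
            then have "k \<le> int n" using kprop by blast
            with \<open>int n < k\<close> show False by simp
          qed
          then show ?thesis using T0 False unfolding Knth by simp
        qed
      next
        case False
        then have "n \<noteq> kn" using kk by auto
        then show ?thesis using H False unfolding Knth by simp
      qed
      then show "(Ptot * ThA - Ptot * ThB) $ n = K $ n" by (simp add: Scoef Tcoef)
    qed
  next
    assume E: "Ptot * ThA - Ptot * ThB = K"
    show "\<forall>N>k. card (Sset t C A N) = card (Tset t C B m N)"
    proof (intro allI impI)
      fix N assume N: "k < N"
      have "0 \<le> N" using N k0 by simp
      then obtain n where n: "N = int n" using nonneg_int_cases by blast
      have "n \<noteq> kn" using N n kk by auto
      have "(Ptot * ThA - Ptot * ThB) $ n = K $ n" using E by simp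
      then have "int (card (Sset t C A (int n))) - int (card (Tset t C B m (int n))) = 0"
        using \<open>n \<noteq> kn\<close> unfolding Knth by (simp add: Scoef Tcoef)
      then show "card (Sset t C A N) = card (Tset t C B m N)" using n by simp
    qed
  qed
  have FsEO: "Fs = Es - Os"
  proof -
    have "Fs = ser Fset wF (\<lambda>f. (if even (\<Sum>i<t. f i) then 1 else 0) - (if odd (\<Sum>i<t. f i) then 1 else 0))"
      unfolding Fs_def by (rule ser_cong) (auto simp: sg_def)
    then show ?thesis unfolding Es_def Os_def ser_diff .
  qed
  have Acoef: "ThA $ n = int (card {d. d \<in> {..<t} \<rightarrow>\<^sub>E (UNIV :: int set) \<and> odd (\<Sum>i<t. d i)
              \<and> (\<Sum>i<t. C i * binom2 (d i)) + (\<Sum>i<t. A i * d i) = int n})" for n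
  proof -
    have "{x \<in> Dodd. wA x = int n} = {d. d \<in> {..<t} \<rightarrow>\<^sub>E (UNIV :: int set) \<and> odd (\<Sum>i<t. d i)
              \<and> (\<Sum>i<t. C i * binom2 (d i)) + (\<Sum>i<t. A i * d i) = int n}"
      unfolding Dodd_def Fset_def wA_def by auto
    then show ?thesis unfolding ThA_def ser_card by simp
  qed
  have Bcoef: "ThB $ n = int (card {e. e \<in> {..<t} \<rightarrow>\<^sub>E (UNIV :: int set) \<and> odd (\<Sum>i<t. e i)
              \<and> (\<Sum>i<t. C i * binom2 (e i)) + (\<Sum>i<t. B i * e i) + m = int n})" for n
  proof -
    have "{x \<in> Dodd. wB x = int n} = {e. e \<in> {..<t} \<rightarrow>\<^sub>E (UNIV :: int set) \<and> odd (\<Sum>i<t. e i)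
              \<and> (\<Sum>i<t. C i * binom2 (e i)) + (\<Sum>i<t. B i * e i) + m = int n}"
      unfolding Dodd_def Fset_def wB_def by auto
    then show ?thesis unfolding ThB_def ser_card by simp
  qed
  have PEcoef: "(fps_X ^ kn * ser Fset wF (\<lambda>f. if P (\<Sum>i<t. f i) then 1 else 0)) $ n
      = int (card {f. f \<in> {..<t} \<rightarrow>\<^sub>E (UNIV :: int set) \<and> P (\<Sum>i<t. f i)
              \<and> (\<Sum>i<t. C i * pent (f i)) + k = int n})" for n and P :: "int \<Rightarrow> bool"
  proof (cases "n < kn")
    case True
    have "{f. f \<in> {..<t} \<rightarrow>\<^sub>E (UNIV :: int set) \<and> P (\<Sum>i<t. f i)
              \<and> (\<Sum>i<t. C i * pent (f i)) + k = int n} = {}"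
    proof (rule equals0I)
      fix f assume "f \<in> {f. f \<in> {..<t} \<rightarrow>\<^sub>E (UNIV :: int set) \<and> P (\<Sum>i<t. f i)
              \<and> (\<Sum>i<t. C i * pent (f i)) + k = int n}"
      then have "wF f + k = int n" unfolding wF_def by simp
      moreover have "0 \<le> wF f" by (rule wF_nn)
      ultimately show False using True kk by linarith
    qed
    then have "card {f. f \<in> {..<t} \<rightarrow>\<^sub>E (UNIV :: int set) \<and> P (\<Sum>i<t. f i)
              \<and> (\<Sum>i<t. C i * pent (f i)) + k = int n} = 0" by (simp only: card.empty)
    then show ?thesis using True by (simp add: fps_X_power_mult_nth)
  next
    case False
    have "(fps_X ^ kn * ser Fset wF (\<lambda>f. if P (\<Sum>i<t. f i) then 1 else 0)) $ n
        = int (card {x\<in>Fset. wF x = int (n - kn) \<and> P (\<Sum>i<t. x i)})"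
      unfolding fps_X_power_mult_nth if_not_P[OF False] by (rule ser_ind[OF finF])
    also have "{x\<in>Fset. wF x = int (n - kn) \<and> P (\<Sum>i<t. x i)}
       = {f. f \<in> {..<t} \<rightarrow>\<^sub>E (UNIV :: int set) \<and> P (\<Sum>i<t. f i)
              \<and> (\<Sum>i<t. C i * pent (f i)) + k = int n}"
    proof -
      have d: "int (n - kn) = int n - k" using False kk by (simp add: of_nat_diff)
      have "(wF x = int (n - kn)) = ((\<Sum>i<t. C i * pent (x i)) + k = int n)" for x
        unfolding d wF_def by linarith
      then show ?thesis unfolding Fset_def by blast
    qed
    finally show ?thesis .
  qed
  have Ucoef: "int (uN t C A k (int n)) = ThA $ n + int c0 * (fps_X ^ kn * Os) $ n" for n
    unfolding uN_def Acoef c0_def Os_def PEcoef[where P = odd] by simp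
  have Vcoef: "int (vN t C A B m k (int n)) = ThB $ n + int c0 * (fps_X ^ kn * Es) $ n" for n
    unfolding vN_def Bcoef c0_def Es_def PEcoef[where P = even] by simp
  have Uneg: "uN t C A k N = 0" if "N < 0" for N
  proof -
    have e1: "{d. d \<in> {..<t} \<rightarrow>\<^sub>E (UNIV :: int set) \<and> odd (\<Sum>i<t. d i)
              \<and> (\<Sum>i<t. C i * binom2 (d i)) + (\<Sum>i<t. A i * d i) = N} = {}"
    proof (rule equals0I)
      fix d assume "d \<in> {d. d \<in> {..<t} \<rightarrow>\<^sub>E (UNIV :: int set) \<and> odd (\<Sum>i<t. d i)
              \<and> (\<Sum>i<t. C i * binom2 (d i)) + (\<Sum>i<t. A i * d i) = N}"
      then have "wA d = N" unfolding wA_def by simp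
      moreover have "0 \<le> wA d" by (rule wA_nn)
      ultimately show False using that by linarith
    qed
    have e2: "{f. f \<in> {..<t} \<rightarrow>\<^sub>E (UNIV :: int set) \<and> odd (\<Sum>i<t. f i)
              \<and> (\<Sum>i<t. C i * pent (f i)) + k = N} = {}"
    proof (rule equals0I)
      fix f assume "f \<in> {f. f \<in> {..<t} \<rightarrow>\<^sub>E (UNIV :: int set) \<and> odd (\<Sum>i<t. f i)
              \<and> (\<Sum>i<t. C i * pent (f i)) + k = N}"
      then have "wF f + k = N" unfolding wF_def by simp
      moreover have "0 \<le> wF f" by (rule wF_nn)
      ultimately show False using that k0 by linarith
    qed
    show ?thesis unfolding uN_def e1 e2 by simp
  qed
  have Vneg: "vN t C A B m k N = 0" if "N < 0" for N
  proof -
    have e1: "{e. e \<in> {..<t} \<rightarrow>\<^sub>E (UNIV :: int set) \<and> odd (\<Sum>i<t. e i)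
              \<and> (\<Sum>i<t. C i * binom2 (e i)) + (\<Sum>i<t. B i * e i) + m = N} = {}"
    proof (rule equals0I)
      fix e assume "e \<in> {e. e \<in> {..<t} \<rightarrow>\<^sub>E (UNIV :: int set) \<and> odd (\<Sum>i<t. e i)
              \<and> (\<Sum>i<t. C i * binom2 (e i)) + (\<Sum>i<t. B i * e i) + m = N}"
      then have "e \<in> Dodd" "wB e = N" unfolding Dodd_def Fset_def wB_def by auto
      then have "k < N" using wBk by blast
      then show False using that k0 by linarith
    qed
    have e2: "{f. f \<in> {..<t} \<rightarrow>\<^sub>E (UNIV :: int set) \<and> even (\<Sum>i<t. f i)
              \<and> (\<Sum>i<t. C i * pent (f i)) + k = N} = {}"
    proof (rule equals0I)
      fix f assume "f \<in> {f. f \<in> {..<t} \<rightarrow>\<^sub>E (UNIV :: int set) \<and> even (\<Sum>i<t. f i)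
              \<and> (\<Sum>i<t. C i * pent (f i)) + k = N}"
      then have "wF f + k = N" unfolding wF_def by simp
      moreover have "0 \<le> wF f" by (rule wF_nn)
      ultimately show False using that k0 by linarith
    qed
    show ?thesis unfolding vN_def e1 e2 by simp
  qed
  have KF: "(K * Fs) $ n = int c0 * ((fps_X ^ kn * Es) $ n - (fps_X ^ kn * Os) $ n)" for n
    unfolding K_def FsEO by (simp add: mult.assoc right_diff_distrib)
  have RHS: "(\<forall>N. uN t C A k N = vN t C A B m k N) \<longleftrightarrow> ThA - ThB = K * Fs"
  proof
    assume H: "\<forall>N. uN t C A k N = vN t C A B m k N"
    show "ThA - ThB = K * Fs"
    proof (rule fps_ext)
      fix n
      have "int (uN t C A k (int n)) = int (vN t C A B m k (int n))" using H by simp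
      then show "(ThA - ThB) $ n = (K * Fs) $ n" unfolding Ucoef Vcoef KF by (simp add: algebra_simps)
    qed
  next
    assume E: "ThA - ThB = K * Fs"
    show "\<forall>N. uN t C A k N = vN t C A B m k N"
    proof
      fix N
      show "uN t C A k N = vN t C A B m k N"
      proof (cases "N < 0")
        case True then show ?thesis using Uneg Vneg by simp
      next
        case False
        then obtain n where n: "N = int n" using nonneg_int_cases by (metis not_less)
        have "(ThA - ThB) $ n = (K * Fs) $ n" using E by simp
        then have "int (uN t C A k (int n)) = int (vN t C A B m k (int n))"
          unfolding Ucoef Vcoef KF by (simp add: algebra_simps)
        then show ?thesis using n by simp
      qed
    qed
  qed
  show ?thesis unfolding LHS RHS by (rule alg_equiv[OF PF1])
qed



end
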